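(* In the Schröder case there is a constant $c\in(0,\infty)$ such that \[\sum_{1\le k\le\delta/\varepsilon_n^2}\mathbf{P}(Z_n=k)\,\mathbf{P}(S_k\ge\varepsilon_nk)\le c\,\delta^\alpha\varepsilon_n^{-2\alpha}m^{-\alpha n}\qquad\text{for all }\delta>0,\ \varepsilon_n>0,\ n\ge1.\]
   Context: $Z=(Z_n)_{n\ge0}$ is a Galton–Watson process with $Z_0=1$, offspring law $\{p_k\}$ with mean $m\in(1,\infty)$ and $\mathbf{E}Z_1\log Z_1<\infty$. Independently, $(X_n)$ are i.i.d. with $\mathbf{E}X_1=0$, $\mathbf{E}X_1^2\in(0,\infty)$; $S_k:=X_1+\dots+X_k$. $f$ is the offspring generating function, $q$ the extinction probability, $\alpha$ defined by $f'(q)=m^{-\alpha}$; Schröder case: $p_0+p_1>0$, i.e. $\alpha\in(0,\infty)$. *)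

theory Defs
  imports "HOL-Probability.Probability"
begin

fun sum_iid_pmf :: "nat pmf \<Rightarrow> nat \<Rightarrow> nat pmf" where
  "sum_iid_pmf p 0 = return_pmf 0"
| "sum_iid_pmf p (Suc k) = bind_pmf (sum_iid_pmf p k) (\<lambda>s. map_pmf (\<lambda>x. s + x) p)"

text \<open>Law of Z_n for a Galton--Watson process with Z_0 = 1 and offspring law p.\<close>
fun gw_pmf :: "nat pmf \<Rightarrow> nat \<Rightarrow> nat pmf" where
  "gw_pmf p 0 = return_pmf 1"
| "gw_pmf p (Suc n) = bind_pmf (gw_pmf p n) (\<lambda>z. sum_iid_pmf p z)"

definition offspring_mean :: "nat pmf \<Rightarrow> real" where
  "offspring_mean p = (\<Sum>k. pmf p k * real k)"

definition gen_fun :: "nat pmf \<Rightarrow> real \<Rightarrow> real" where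
  "gen_fun p s = (\<Sum>k. pmf p k * s ^ k)"

definition gen_fun_deriv :: "nat pmf \<Rightarrow> real \<Rightarrow> real" where
  "gen_fun_deriv p s = (\<Sum>k. real k * pmf p k * s ^ (k - 1))"

definition extinction_prob :: "nat pmf \<Rightarrow> real" where
  "extinction_prob p = Inf {s\<in>{0..1}. gen_fun p s = s}"

text \<open>alpha defined by f'(q) = m^(-alpha).\<close>
definition schroeder_alpha :: "nat pmf \<Rightarrow> real" where
  "schroeder_alpha p = - ln (gen_fun_deriv p (extinction_prob p)) / ln (offspring_mean p)"

end

theory Submission imports Defs begin

lemma pmf_nat_summable: "summable (\<lambda>k::nat. pmf \<mu> k)" and pmf_nat_sum1: "(\<Sum>k. pmf \<mu> k) = 1"
proof -
  have "(\<Sum>k. ennreal (pmf \<mu> k)) = (\<integral>\<^sup>+ x. pmf \<mu> x \<partial>count_space UNIV)"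
    by (simp add: nn_integral_count_space_nat)
  also have "\<dots> = 1" by (simp add: nn_integral_pmf)
  finally have e: "(\<Sum>k. ennreal (pmf \<mu> k)) = 1" .
  show s: "summable (\<lambda>k::nat. pmf \<mu> k)"
    by (rule summable_suminf_not_top) (use e in auto)
  have "ennreal (\<Sum>k. pmf \<mu> k) = 1" using e suminf_ennreal2[OF pmf_nonneg s] by simp
  then show "(\<Sum>k. pmf \<mu> k) = 1" by (simp add: suminf_nonneg s)
qed

lemma pmf_pow_summable:
  assumes "0 \<le> s" "s \<le> 1"
  shows "summable (\<lambda>k::nat. pmf \<mu> k * s ^ k)"
  by (rule summable_comparison_test[OF _ pmf_nat_summable[of \<mu>]])
     (use assms in \<open>auto intro!: exI[of _ 0] mult_left_le power_le_one\<close>)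

definition GF :: "nat pmf \<Rightarrow> real \<Rightarrow> ennreal" where
  "GF \<mu> s = (\<integral>\<^sup>+ k. ennreal (s ^ k) \<partial>measure_pmf \<mu>)"

lemma GF_sum:
  assumes "0 \<le> s" "s \<le> 1"
  shows "GF \<mu> s = ennreal (\<Sum>k. pmf \<mu> k * s ^ k)"
proof -
  have "GF \<mu> s = (\<integral>\<^sup>+ k. ennreal (pmf \<mu> k) * ennreal (s ^ k) \<partial>count_space UNIV)"
    unfolding GF_def by (simp add: nn_integral_measure_pmf)
  also have "\<dots> = (\<Sum>k. ennreal (pmf \<mu> k * s ^ k))"
    by (simp add: nn_integral_count_space_nat ennreal_mult' assms)
  also have "\<dots> = ennreal (\<Sum>k. pmf \<mu> k * s ^ k)"
    by (rule suminf_ennreal2) (use assms pmf_pow_summable in auto)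
  finally show ?thesis .
qed

lemma GF_sum_iid:
  assumes "0 \<le> s" "s \<le> 1"
  shows "GF (sum_iid_pmf p k) s = ennreal (gen_fun p s ^ k)"
proof (induction k)
  case 0 then show ?case by (simp add: GF_def)
next
  case (Suc k)
  have "GF (sum_iid_pmf p (Suc k)) s = (\<integral>\<^sup>+ a. ennreal (s ^ a) * GF p s \<partial>measure_pmf (sum_iid_pmf p k))"
    unfolding GF_def by (simp add: power_add ennreal_mult' assms nn_integral_cmult)
  also have "\<dots> = GF (sum_iid_pmf p k) s * GF p s"
    unfolding GF_def by (simp add: nn_integral_multc)
  also have "\<dots> = ennreal (gen_fun p s ^ Suc k)"
  proof -
    have g0: "0 \<le> gen_fun p s" unfolding gen_fun_def
      by (rule suminf_nonneg[OF pmf_pow_summable]) (use assms in auto)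
    have "GF p s = ennreal (gen_fun p s)" using GF_sum[OF assms, of p] unfolding gen_fun_def .
    then show ?thesis using Suc g0 by (simp add: ennreal_mult[symmetric] mult.commute)
  qed
  finally show ?case .
qed

lemma gen_fun_nonneg: "0 \<le> s \<Longrightarrow> s \<le> 1 \<Longrightarrow> 0 \<le> gen_fun p s"
  unfolding gen_fun_def by (rule suminf_nonneg[OF pmf_pow_summable]) auto

lemma gen_fun_le1: "0 \<le> s \<Longrightarrow> s \<le> 1 \<Longrightarrow> gen_fun p s \<le> 1"
  unfolding gen_fun_def
  by (rule order.trans[OF suminf_le[OF _ pmf_pow_summable pmf_nat_summable]])
     (auto simp: pmf_nat_sum1 intro!: mult_left_le power_le_one)

lemma gen_fun_1: "gen_fun p 1 = 1"
  unfolding gen_fun_def by (simp add: pmf_nat_sum1)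

lemma gen_fun_0: "gen_fun p 0 = pmf p 0"
  unfolding gen_fun_def
  by (subst suminf_finite[of "{0}"]) auto

lemma iter_01: "0 \<le> s \<Longrightarrow> s \<le> 1 \<Longrightarrow> 0 \<le> (gen_fun p ^^ n) s \<and> (gen_fun p ^^ n) s \<le> 1"
  by (induction n) (auto simp: gen_fun_nonneg gen_fun_le1)

lemma GF_gw:
  assumes "0 \<le> s" "s \<le> 1"
  shows "GF (gw_pmf p n) s = ennreal ((gen_fun p ^^ n) s)"
  using assms
proof (induction n arbitrary: s)
  case 0 then show ?case by (simp add: GF_def)
next
  case (Suc n)
  have "GF (gw_pmf p (Suc n)) s = (\<integral>\<^sup>+ z. GF (sum_iid_pmf p z) s \<partial>measure_pmf (gw_pmf p n))"
    by (simp add: GF_def)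
  also have "\<dots> = GF (gw_pmf p n) (gen_fun p s)"
    unfolding GF_sum_iid[OF Suc.prems] by (simp add: GF_def)
  also have "\<dots> = ennreal ((gen_fun p ^^ n) (gen_fun p s))"
    using Suc.IH gen_fun_nonneg gen_fun_le1 Suc.prems by blast
  finally show ?case by (simp add: funpow_swap1)
qed

lemma gw_gen:
  assumes "0 \<le> s" "s \<le> 1"
  shows "(\<Sum>k. pmf (gw_pmf p n) k * s ^ k) = (gen_fun p ^^ n) s"
proof -
  have a: "0 \<le> (gen_fun p ^^ n) s" using iter_01[OF assms] by blast
  have "ennreal (\<Sum>k. pmf (gw_pmf p n) k * s ^ k) = ennreal ((gen_fun p ^^ n) s)"
    using GF_gw[OF assms] GF_sum[OF assms] by simp
  then show ?thesis using a
    by (subst (asm) ennreal_inj) (use assms in \<open>auto intro!: suminf_nonneg pmf_pow_summable\<close>)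
qed

definition TT :: "nat \<Rightarrow> real \<Rightarrow> real \<Rightarrow> real" where
  "TT k a b = (\<Sum>i<k. a ^ (k - Suc i) * b ^ i)"

lemma TT_nonneg: "0 \<le> a \<Longrightarrow> 0 \<le> b \<Longrightarrow> 0 \<le> TT k a b"
  unfolding TT_def by (auto intro!: sum_nonneg)

lemma TT_le_k: "0 \<le> a \<Longrightarrow> a \<le> 1 \<Longrightarrow> 0 \<le> b \<Longrightarrow> b \<le> 1 \<Longrightarrow> TT k a b \<le> real k"
proof -
  assume h: "0 \<le> a" "a \<le> 1" "0 \<le> b" "b \<le> 1"
  have "TT k a b \<le> (\<Sum>i<k. 1)" unfolding TT_def
    by (rule sum_mono) (use h in \<open>auto intro!: mult_le_one power_le_one\<close>)
  then show ?thesis by simp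
qed

lemma TT_mono: "0 \<le> a \<Longrightarrow> a \<le> a' \<Longrightarrow> 0 \<le> b \<Longrightarrow> b \<le> b' \<Longrightarrow> TT k a b \<le> TT k a' b'"
  unfolding TT_def by (auto intro!: sum_mono mult_mono power_mono)

lemma TT_diag: "TT k b b = real k * b ^ (k - 1)"
proof -
  have "TT k b b = (\<Sum>i<k. b ^ (k - 1))" unfolding TT_def
    by (rule sum.cong) (auto simp flip: power_add)
  then show ?thesis by simp
qed

lemma pow_diff_TT: "b ^ k - a ^ k = (b - a) * TT k a b"
  unfolding TT_def by (rule power_diff_sumr2)

lemma pow_chord:
  fixes q b r :: real
  assumes "0 \<le> q" "q \<le> b" "b \<le> r" "q < r"
  shows "b ^ i - q ^ i \<le> (b - q) * ((r ^ i - q ^ i) / (r - q))"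
proof -
  have "b ^ i - q ^ i = (b - q) * TT i q b" by (rule pow_diff_TT)
  also have "\<dots> \<le> (b - q) * TT i q r" using assms by (intro mult_left_mono TT_mono) auto
  also have "TT i q r = (r ^ i - q ^ i) / (r - q)" using assms pow_diff_TT[of r i q] by simp
  finally show ?thesis .
qed

lemma TT_chord:
  assumes "0 \<le> q" "q \<le> b" "b \<le> r" "q < r"
  shows "TT k q b - TT k q q \<le> (b - q) / (r - q) * (TT k q r - TT k q q)"
proof -
  have "TT k q b - TT k q q = (\<Sum>i<k. q ^ (k - Suc i) * (b ^ i - q ^ i))"
    unfolding TT_def by (simp add: sum_subtractf right_diff_distrib)
  also have "\<dots> \<le> (\<Sum>i<k. q ^ (k - Suc i) * ((b - q) * ((r ^ i - q ^ i) / (r - q))))"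
    using assms by (intro sum_mono mult_left_mono pow_chord) auto
  also have "\<dots> = (b - q) / (r - q) * (\<Sum>i<k. q ^ (k - Suc i) * r ^ i - q ^ (k - Suc i) * q ^ i)"
    unfolding sum_distrib_left by (rule sum.cong) (use assms in \<open>simp_all add: field_simps\<close>)
  also have "\<dots> = (b - q) / (r - q) * (TT k q r - TT k q q)"
    unfolding TT_def by (simp add: sum_subtractf)
  finally show ?thesis .
qed

lemma pow_upper2:
  fixes v :: real
  assumes "0 \<le> v" "v \<le> 1"
  shows "(1 - v) ^ k \<le> 1 - real k * v + (real k * v)\<^sup>2"
proof (induction k)
  case (Suc k)
  have "(1 - v) ^ Suc k = (1 - v) * (1 - v) ^ k" by simp
  also have "\<dots> \<le> (1 - v) * (1 - real k * v + (real k * v)\<^sup>2)"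
    using assms Suc by (intro mult_left_mono) auto
  also have "\<dots> \<le> 1 - real (Suc k) * v + (real (Suc k) * v)\<^sup>2"
  proof -
    have "0 \<le> (real k)\<^sup>2 * v ^ 3" using assms by simp
    moreover have "0 \<le> (real k + 1) * v\<^sup>2" using assms by simp
    ultimately show ?thesis by (simp add: power2_eq_square power3_eq_cube algebra_simps)
  qed
  finally show ?case .
qed simp

lemma min_geo_bound:
  fixes rho a :: real
  assumes rho: "1 < rho" and a: "0 \<le> a"
  shows "(\<Sum>l<J. min 1 (a * (1 / rho) ^ l)) \<le> (2 * rho / (rho - 1)) * ln (1 + a)"
  using a
proof (induction J arbitrary: a)
  case 0 then show ?case using rho by simp
next
  case (Suc J)
  have "(\<Sum>l<Suc J. min 1 (a * (1 / rho) ^ l)) = min 1 a + (\<Sum>l<J. min 1 ((a / rho) * (1 / rho) ^ l))"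
    by (subst sum.lessThan_Suc_shift) (simp add: field_simps)
  also have "\<dots> \<le> min 1 a + (2 * rho / (rho - 1)) * ln (1 + a / rho)"
    using Suc.IH[of "a / rho"] Suc.prems rho by simp
  also have "\<dots> \<le> (2 * rho / (rho - 1)) * ln (1 + a)"
  proof -
    define y where "y = (1 + a) / (1 + a / rho)"
    have pos: "0 < 1 + a / rho" using Suc.prems rho by (simp add: add_pos_nonneg)
    then have y0: "0 < y" using Suc.prems unfolding y_def by (intro divide_pos_pos) auto
    have "ln (1 + a) - ln (1 + a / rho) = ln y"
      using Suc.prems rho pos by (subst y_def, subst ln_div) auto
    moreover have "ln (1 / y) \<le> 1 / y - 1" using y0 by (intro ln_le_minus_one) simp
    then have "1 - 1 / y \<le> ln y" using y0 by (simp add: ln_div)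
    moreover have "1 - 1 / y = a * (rho - 1) / (rho * (1 + a))"
    proof -
      have h1: "1 + a \<noteq> 0" "rho \<noteq> 0" "rho + a * rho \<noteq> 0" using Suc.prems rho
        by (auto simp: add_pos_nonneg) (smt (verit) mult_nonneg_nonneg)
      show ?thesis using h1 by (simp add: y_def field_simps)
    qed
    moreover have "min 1 a \<le> 2 * a / (1 + a)"
      using Suc.prems by (auto simp: field_simps min_def mult_left_le_one_le)
    moreover have "(2 * rho / (rho - 1)) * (a * (rho - 1) / (rho * (1 + a))) = 2 * a / (1 + a)"
    proof -
      have h: "rho - 1 \<noteq> 0" "rho \<noteq> 0" "1 + a \<noteq> 0" using rho Suc.prems by auto
      have "(2 * rho / (rho - 1)) * (a * (rho - 1) / (rho * (1 + a)))
          = (2 * a * (rho * (rho - 1))) / ((1 + a) * (rho * (rho - 1)))"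
        unfolding times_divide_times_eq by (simp add: mult_ac)
      also have "\<dots> = 2 * a / (1 + a)"
        by (rule mult_divide_mult_cancel_right) (use h in simp)
      finally show ?thesis .
    qed
    moreover have "0 \<le> 2 * rho / (rho - 1)" using rho by simp
    ultimately have "min 1 a \<le> (2 * rho / (rho - 1)) * (ln (1 + a) - ln (1 + a / rho))"
      by (smt (verit) mult_left_mono)
    then show ?thesis by (simp add: algebra_simps)
  qed
  finally show ?case .
qed

context
  fixes p :: "nat pmf"
  assumes mean_fin: "summable (\<lambda>k. pmf p k * real k)"
    and mean_gt1: "offspring_mean p > 1"
    and LlogL: "summable (\<lambda>k. pmf p k * (real k * ln (real k)))"
    and schroeder: "pmf p 0 + pmf p 1 > 0"
begin

definition CS :: "real \<Rightarrow> real \<Rightarrow> real" where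
  "CS a b = (\<Sum>k. pmf p k * TT k a b)"

lemma CS_summable: "0 \<le> a \<Longrightarrow> a \<le> 1 \<Longrightarrow> 0 \<le> b \<Longrightarrow> b \<le> 1 \<Longrightarrow> summable (\<lambda>k. pmf p k * TT k a b)"
proof -
  assume h: "0 \<le> a" "a \<le> 1" "0 \<le> b" "b \<le> 1"
  show ?thesis
  proof (rule summable_comparison_test[OF _ mean_fin], intro exI allI impI)
    fix n :: nat
    have "0 \<le> pmf p n * TT n a b" using h by (simp add: TT_nonneg)
    then show "norm (pmf p n * TT n a b) \<le> pmf p n * real n"
      using h by (simp add: mult_left_mono TT_le_k)
  qed
qed

lemma CS_nonneg: "0 \<le> a \<Longrightarrow> a \<le> 1 \<Longrightarrow> 0 \<le> b \<Longrightarrow> b \<le> 1 \<Longrightarrow> 0 \<le> CS a b"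
  unfolding CS_def by (rule suminf_nonneg[OF CS_summable]) (auto intro!: TT_nonneg mult_nonneg_nonneg)

lemma CS_mono: "0 \<le> a \<Longrightarrow> a \<le> a' \<Longrightarrow> a' \<le> 1 \<Longrightarrow> 0 \<le> b \<Longrightarrow> b \<le> b' \<Longrightarrow> b' \<le> 1 \<Longrightarrow> CS a b \<le> CS a' b'"
  unfolding CS_def by (rule suminf_le[OF _ CS_summable CS_summable]) (auto intro!: mult_left_mono TT_mono)

lemma F_diff: "0 \<le> a \<Longrightarrow> a \<le> 1 \<Longrightarrow> 0 \<le> b \<Longrightarrow> b \<le> 1 \<Longrightarrow> gen_fun p b - gen_fun p a = (b - a) * CS a b"
proof -
  assume h: "0 \<le> a" "a \<le> 1" "0 \<le> b" "b \<le> 1"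
  have "gen_fun p b - gen_fun p a = (\<Sum>k. pmf p k * b ^ k - pmf p k * a ^ k)"
    unfolding gen_fun_def by (rule suminf_diff) (use h pmf_pow_summable in auto)
  also have "\<dots> = (\<Sum>k. (b - a) * (pmf p k * TT k a b))"
    by (rule suminf_cong) (simp add: pow_diff_TT flip: right_diff_distrib)
  also have "\<dots> = (b - a) * CS a b"
    unfolding CS_def by (rule suminf_mult) (rule CS_summable[OF h])
  finally show ?thesis .
qed

lemma CS_deriv: "0 \<le> b \<Longrightarrow> b \<le> 1 \<Longrightarrow> gen_fun_deriv p b = CS b b"
  unfolding gen_fun_deriv_def CS_def by (simp add: TT_diag mult_ac)

lemma CS_mean: "offspring_mean p = CS 1 1"
  unfolding offspring_mean_def CS_def by (simp add: TT_diag mult_ac)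

lemma F_mono: "0 \<le> a \<Longrightarrow> a \<le> b \<Longrightarrow> b \<le> 1 \<Longrightarrow> gen_fun p a \<le> gen_fun p b"
proof -
  assume h: "0 \<le> a" "a \<le> b" "b \<le> 1"
  have "0 \<le> (b - a) * CS a b" using h by (intro mult_nonneg_nonneg CS_nonneg) auto
  then show ?thesis using F_diff[of a b] h by simp
qed

lemma iter_mono: "0 \<le> a \<Longrightarrow> a \<le> b \<Longrightarrow> b \<le> 1 \<Longrightarrow> (gen_fun p ^^ n) a \<le> (gen_fun p ^^ n) b"
proof (induction n)
  case (Suc n)
  then show ?case using iter_01[where s=a and p=p and n=n] iter_01[where s=b and p=p and n=n] by (auto intro!: F_mono)
qed simp

lemma F_cont: "continuous_on {0..1} (gen_fun p)"
proof -
  have "(CS 1 1)-lipschitz_on {0..1} (gen_fun p)"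
  proof (rule lipschitz_onI)
    fix x y :: real assume "x \<in> {0..1}" "y \<in> {0..1}"
    then have h: "0 \<le> x" "x \<le> 1" "0 \<le> y" "y \<le> 1" by auto
    have "\<bar>gen_fun p x - gen_fun p y\<bar> = \<bar>x - y\<bar> * CS y x"
      using F_diff[OF h(3,4,1,2)] CS_nonneg[OF h(3,4,1,2)] by (simp add: abs_mult)
    also have "\<dots> \<le> \<bar>x - y\<bar> * CS 1 1" by (rule mult_left_mono) (use h in \<open>auto intro!: CS_mono\<close>)
    finally show "dist (gen_fun p x) (gen_fun p y) \<le> CS 1 1 * dist x y" by (simp add: dist_real_def mult_ac)
  next
    show "0 \<le> CS 1 1" by (rule CS_nonneg) auto
  qed
  then show ?thesis by (rule lipschitz_on_continuous_on)
qed

lemma exists_below: "\<exists>t. 0 < t \<and> t < 1 \<and> gen_fun p t < t"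
proof -
  have "(\<lambda>N. \<Sum>k<N. pmf p k * real k) \<longlonglongrightarrow> offspring_mean p"
    unfolding offspring_mean_def by (rule summable_LIMSEQ[OF mean_fin])
  from order_tendstoD(1)[OF this mean_gt1] obtain N where
    N: "(\<Sum>k<N. pmf p k * real k) > 1" by (auto simp: eventually_sequentially)
  define M where "M = (\<Sum>k<N. pmf p k * real k)"
  have M1: "M > 1" using N by (simp add: M_def)
  have N0: "N > 0" using N by (cases N) auto
  define c where "c = (1 / M + 1) / 2"
  have c01: "0 < c" "c < 1" using M1 by (auto simp: c_def field_simps)
  have cM: "c * M > 1" using M1 by (simp add: c_def field_simps)
  define t where "t = root N c"
  have t01: "0 < t" "t < 1" using c01 N0 by (auto simp: t_def real_root_gt_zero)
  have tN: "t ^ N = c" using c01 N0 by (simp add: t_def)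
  have "c * M = (\<Sum>k<N. pmf p k * (real k * t ^ N))"
    by (simp add: M_def tN sum_distrib_left mult_ac)
  also have "\<dots> \<le> (\<Sum>k<N. pmf p k * TT k t 1)"
  proof (rule sum_mono)
    fix k assume k: "k \<in> {..<N}"
    have "real k * t ^ N = (\<Sum>i<k. t ^ N)" by simp
    also have "\<dots> \<le> TT k t 1" unfolding TT_def
      by (rule sum_mono) (use k t01 in \<open>auto intro!: power_decreasing\<close>)
    finally show "pmf p k * (real k * t ^ N) \<le> pmf p k * TT k t 1" by (rule mult_left_mono) simp
  qed
  also have "\<dots> \<le> CS t 1" unfolding CS_def
    by (rule sum_le_suminf[OF CS_summable]) (use t01 in \<open>auto intro!: mult_nonneg_nonneg TT_nonneg\<close>)
  finally have "CS t 1 > 1" using cM by simp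
  moreover have "1 - gen_fun p t = (1 - t) * CS t 1"
    using F_diff[of t 1] t01 by (simp add: gen_fun_1)
  ultimately have "gen_fun p t < t" using t01
    by (smt (verit) mult_less_cancel_left1)
  then show ?thesis using t01 by blast
qed

lemma q_props: "gen_fun p (extinction_prob p) = extinction_prob p" "0 \<le> extinction_prob p"
  "\<exists>r. extinction_prob p < r \<and> r < 1 \<and> gen_fun p r < r"
proof -
  define Fx where "Fx = {x \<in> {0..1::real}. gen_fun p x - x = 0}"
  obtain t where t: "0 < t" "t < 1" "gen_fun p t < t" using exists_below by blast
  have "continuous_on {0..t} (\<lambda>x. x - gen_fun p x)"
    by (intro continuous_intros continuous_on_subset[OF F_cont]) (use t in auto)
  moreover have "0 - gen_fun p 0 \<le> 0" using gen_fun_nonneg[of 0 p] by simp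
  moreover have "0 \<le> t - gen_fun p t" using t by simp
  ultimately obtain s0 where s0: "0 \<le> s0" "s0 \<le> t" "s0 - gen_fun p s0 = 0"
    using IVT'[of "\<lambda>x. x - gen_fun p x" 0 0 t] t by auto
  have s0t: "s0 < t" using s0 t by (cases "s0 = t") auto
  have cl: "closed Fx" unfolding Fx_def
    by (rule continuous_closed_preimage_constant) (auto intro!: continuous_intros F_cont)
  have ne: "s0 \<in> Fx" using s0 t by (auto simp: Fx_def)
  have bdd: "bdd_below Fx" unfolding Fx_def by (rule bdd_belowI[of _ 0]) auto
  have eq: "extinction_prob p = Inf Fx" unfolding extinction_prob_def Fx_def by simp
  have "Inf Fx \<in> Fx" using closed_contains_Inf[OF _ bdd cl] ne by blast
  then show "gen_fun p (extinction_prob p) = extinction_prob p" "0 \<le> extinction_prob p"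
    unfolding eq by (auto simp: Fx_def)
  have "Inf Fx \<le> s0" by (rule cInf_lower[OF ne bdd])
  then show "\<exists>r. extinction_prob p < r \<and> r < 1 \<and> gen_fun p r < r"
    using s0t t unfolding eq by (intro exI[of _ t]) auto
qed

lemma CS_term_le: "0 \<le> a \<Longrightarrow> a \<le> 1 \<Longrightarrow> 0 \<le> b \<Longrightarrow> b \<le> 1 \<Longrightarrow> pmf p k * TT k a b \<le> CS a b"
proof -
  assume h: "0 \<le> a" "a \<le> 1" "0 \<le> b" "b \<le> 1"
  have "\<And>n. 0 \<le> pmf p n * TT n a b" using h by (auto intro!: mult_nonneg_nonneg TT_nonneg)
  then show ?thesis unfolding CS_def
    using sum_le_suminf[OF CS_summable[OF h], of "{k}"] by auto
qed

lemma gamma_props: "0 < CS (extinction_prob p) (extinction_prob p)"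
  "CS (extinction_prob p) (extinction_prob p) \<le> 1" "extinction_prob p < 1"
proof -
  define q where "q = extinction_prob p"
  have fq: "gen_fun p q = q" and q0: "0 \<le> q" using q_props by (auto simp: q_def)
  obtain r where r: "q < r" "r < 1" "gen_fun p r < r" using q_props by (auto simp: q_def)
  show q1: "extinction_prob p < 1" using r by (simp add: q_def)
  have "1 - q = (1 - q) * CS q 1" using F_diff[of q 1] fq q0 r by (simp add: gen_fun_1)
  then have "CS q 1 = 1" using r by simp
  moreover have "CS q q \<le> CS q 1" using q0 r by (intro CS_mono) auto
  ultimately show "CS (extinction_prob p) (extinction_prob p) \<le> 1" by (simp add: q_def)
  show "0 < CS (extinction_prob p) (extinction_prob p)"
  proof (cases "pmf p 1 > 0")
    case True
    have "pmf p 1 * TT 1 q q \<le> CS q q" using q0 r by (intro CS_term_le) auto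
    then show ?thesis using True by (simp add: TT_def q_def)
  next
    case False
    then have p0: "pmf p 0 > 0" using schroeder pmf_nonneg[of p 1] by linarith
    have "q \<noteq> 0" using fq gen_fun_0[of p] p0 by auto
    with q0 have qpos: "q > 0" by simp
    have "\<exists>k. k \<ge> 1 \<and> pmf p k > 0"
    proof (rule ccontr)
      assume "\<not> ?thesis"
      have "pmf p k * real k = 0" for k
      proof (cases "k \<ge> 1")
        case True
        then have "\<not> pmf p k > 0" using \<open>\<not> (\<exists>k. k \<ge> 1 \<and> pmf p k > 0)\<close> by blast
        then have "pmf p k = 0" using pmf_nonneg[of p k] by linarith
        then show ?thesis by simp
      qed simp
      then have "(\<lambda>k. pmf p k * real k) = (\<lambda>k. 0)" by (intro ext)
      then have "offspring_mean p = 0" unfolding offspring_mean_def by simp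
      then show False using mean_gt1 by simp
    qed
    then obtain k where k: "k \<ge> 1" "pmf p k > 0" by blast
    have "pmf p k * TT k q q \<le> CS q q" using q0 r by (intro CS_term_le) auto
    moreover have "pmf p k * TT k q q > 0" using k qpos by (simp add: TT_diag)
    ultimately show ?thesis by (simp add: q_def)
  qed
qed

lemma CS_chord:
  assumes "0 \<le> q" "q \<le> b" "b \<le> r" "q < r" "r \<le> 1"
  shows "CS q b - CS q q \<le> (b - q) * ((CS q r - CS q q) / (r - q))"
proof -
  have s: "summable (\<lambda>k. pmf p k * TT k q x)" if "q \<le> x" "x \<le> 1" for x
    using assms that by (intro CS_summable) auto
  have "CS q b - CS q q = (\<Sum>k. pmf p k * TT k q b - pmf p k * TT k q q)"
    unfolding CS_def by (rule suminf_diff) (use assms in \<open>auto intro!: s\<close>)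
  also have "\<dots> \<le> (\<Sum>k. (b - q) / (r - q) * (pmf p k * TT k q r - pmf p k * TT k q q))"
  proof (rule suminf_le)
    fix k
    show "pmf p k * TT k q b - pmf p k * TT k q q \<le> (b - q) / (r - q) * (pmf p k * TT k q r - pmf p k * TT k q q)"
      using mult_left_mono[OF TT_chord[OF assms(1-4), of k] pmf_nonneg[of p k]]
      by (simp add: algebra_simps)
    show "summable (\<lambda>k. pmf p k * TT k q b - pmf p k * TT k q q)"
      using assms by (intro summable_diff s) auto
    show "summable (\<lambda>k. (b - q) / (r - q) * (pmf p k * TT k q r - pmf p k * TT k q q))"
      using assms by (intro summable_mult summable_diff s) auto
  qed
  also have "\<dots> = (b - q) / (r - q) * (CS q r - CS q q)"
  proof -
    have "(\<Sum>k. (b - q) / (r - q) * (pmf p k * TT k q r - pmf p k * TT k q q))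
        = (b - q) / (r - q) * (\<Sum>k. pmf p k * TT k q r - pmf p k * TT k q q)"
      by (rule suminf_mult) (use assms in \<open>intro summable_diff s; simp\<close>)
    also have "(\<Sum>k. pmf p k * TT k q r - pmf p k * TT k q q) = CS q r - CS q q"
      unfolding CS_def by (rule suminf_diff[symmetric]) (use assms in \<open>intro s; simp\<close>)+
    finally show ?thesis .
  qed
  finally show ?thesis by simp
qed

lemma partA:
  assumes q0: "0 \<le> q" and qr: "q < r" and r1: "r < 1" and fq: "gen_fun p q = q"
    and fr: "gen_fun p r < r" and g0: "0 < CS q q"
  shows "\<exists>A>0. \<forall>t k. q \<le> t \<longrightarrow> t \<le> r \<longrightarrow> (gen_fun p ^^ k) t - q \<le> A * CS q q ^ k"
proof -
  define g where "g = CS q q"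
  define th where "th = CS q r"
  define L where "L = (th - g) / (r - q)"
  have "gen_fun p r - q = (r - q) * th" using F_diff[of q r] q0 qr r1 fq by (simp add: th_def)
  then have th1: "th < 1" using fr qr by (smt (verit) mult_less_cancel_left2)
  have gth: "g \<le> th" unfolding g_def th_def using q0 qr r1 by (intro CS_mono) auto
  have g0': "0 < g" using g0 by (simp add: g_def)
  have th0: "0 \<le> th" using gth g0' by simp
  have L0: "0 \<le> L" unfolding L_def using gth qr by simp
  have main: "q \<le> (gen_fun p ^^ k) t \<and> (gen_fun p ^^ k) t - q \<le> th ^ k * (t - q) \<and>
      (gen_fun p ^^ k) t - q \<le> (t - q) * g ^ k * exp (L / g * (\<Sum>i<k. th ^ i))"
    if t: "q \<le> t" "t \<le> r" for t k
  proof (induction k)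
    case 0 then show ?case using t by simp
  next
    case (Suc k)
    define x where "x = (gen_fun p ^^ k) t"
    have xq: "q \<le> x" and xb1: "x - q \<le> th ^ k * (t - q)"
      and xb2: "x - q \<le> (t - q) * g ^ k * exp (L / g * (\<Sum>i<k. th ^ i))"
      using Suc by (auto simp: x_def)
    have thk: "th ^ k \<le> 1" "0 \<le> th ^ k" using th0 th1 by (auto intro: power_le_one)
    have tq1: "t - q \<le> 1" using t q0 r1 by simp
    have "th ^ k * (t - q) \<le> t - q" using thk t by (simp add: mult_left_le_one_le)
    then have xr: "x \<le> r" using xb1 t by simp
    have eq: "gen_fun p x - q = (x - q) * CS q x" using F_diff[of q x] q0 xq xr r1 fq by simp
    have c1: "g \<le> CS q x" unfolding g_def using q0 xq xr r1 by (intro CS_mono) auto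
    have c2: "CS q x \<le> th" unfolding th_def using q0 xq xr r1 by (intro CS_mono) auto
    have c3: "CS q x - g \<le> (x - q) * L" unfolding g_def L_def th_def
      using CS_chord[of q x r] q0 xq xr qr r1 by simp
    have xq0: "0 \<le> x - q" using xq by simp
    have A1: "q \<le> gen_fun p x" using eq xq0 c1 g0' by (smt (verit) mult_nonneg_nonneg)
    have "gen_fun p x - q \<le> (x - q) * th" unfolding eq by (rule mult_left_mono[OF c2 xq0])
    also have "\<dots> \<le> th ^ k * (t - q) * th" using xb1 th0 by (rule mult_right_mono)
    finally have A2: "gen_fun p x - q \<le> th ^ Suc k * (t - q)" by (simp add: mult_ac)
    have "(x - q) * L \<le> th ^ k * L"
      using xb1 tq1 thk L0 by (intro mult_right_mono) (auto intro: order.trans mult_left_le)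
    then have "CS q x \<le> g + L * th ^ k" using c3 by (simp add: mult_ac)
    also have "g + L * th ^ k = g * (1 + L / g * th ^ k)" using g0' by (simp add: field_simps)
    also have "\<dots> \<le> g * exp (L / g * th ^ k)" using g0' by (intro mult_left_mono) (auto simp: exp_ge_add_one_self)
    finally have c4: "CS q x \<le> g * exp (L / g * th ^ k)" .
    have "gen_fun p x - q \<le> (x - q) * (g * exp (L / g * th ^ k))"
      unfolding eq by (rule mult_left_mono[OF c4 xq0])
    also have "\<dots> \<le> ((t - q) * g ^ k * exp (L / g * (\<Sum>i<k. th ^ i))) * (g * exp (L / g * th ^ k))"
      using xb2 g0' by (intro mult_right_mono) auto
    also have "\<dots> = (t - q) * g ^ Suc k * exp (L / g * (\<Sum>i<Suc k. th ^ i))"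
      by (simp add: exp_add[symmetric] distrib_left mult_ac)
    finally have A3: "gen_fun p x - q \<le> (t - q) * g ^ Suc k * exp (L / g * (\<Sum>i<Suc k. th ^ i))" .
    show ?case using A1 A2 A3 by (simp add: x_def)
  qed
  define A where "A = exp (L / g * (1 / (1 - th)))"
  show ?thesis
  proof (intro exI[of _ A] conjI allI impI)
    show "0 < A" by (simp add: A_def)
    fix t k assume t: "q \<le> t" "t \<le> r"
    have S: "(\<Sum>i<k. th ^ i) \<le> 1 / (1 - th)"
      using th0 th1 by (simp add: sum_gp_strict field_simps mult_left_le_one_le)
    have "(gen_fun p ^^ k) t - q \<le> (t - q) * g ^ k * exp (L / g * (\<Sum>i<k. th ^ i))"
      using main[OF t] by blast
    also have "\<dots> \<le> 1 * g ^ k * A"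
    proof -
      have "L / g * (\<Sum>i<k. th ^ i) \<le> L / g * (1 / (1 - th))"
        using S L0 g0' by (intro mult_left_mono) auto
      then show ?thesis
        unfolding A_def using t r1 q0 g0'
        by (intro mult_mono) auto
    qed
    finally show "(gen_fun p ^^ k) t - q \<le> A * CS q q ^ k" by (simp add: g_def mult_ac)
  qed
qed

definition EE :: "real \<Rightarrow> real" where
  "EE v = (\<Sum>k. pmf p k * real k * min 1 (real k * v))"

lemma EE_summable: "0 \<le> v \<Longrightarrow> summable (\<lambda>k. pmf p k * real k * min 1 (real k * v))"
proof -
  assume v: "0 \<le> v"
  show ?thesis
  proof (rule summable_comparison_test[OF _ mean_fin], intro exI allI impI)
    fix n :: nat
    have "0 \<le> pmf p n * real n * min 1 (real n * v)" using v by simp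
    moreover have "pmf p n * real n * min 1 (real n * v) \<le> pmf p n * real n"
      by (rule mult_left_le) auto
    ultimately show "norm (pmf p n * real n * min 1 (real n * v)) \<le> pmf p n * real n" by simp
  qed
qed

lemma EE_nonneg: "0 \<le> v \<Longrightarrow> 0 \<le> EE v"
  unfolding EE_def by (rule suminf_nonneg[OF EE_summable]) auto

lemma EE_mono: "0 \<le> v \<Longrightarrow> v \<le> w \<Longrightarrow> EE v \<le> EE w"
proof -
  assume h: "0 \<le> v" "v \<le> w"
  have s: "summable (\<lambda>k. pmf p k * real k * min 1 (real k * v))"
     "summable (\<lambda>k. pmf p k * real k * min 1 (real k * w))" using h by (auto intro!: EE_summable)
  show ?thesis
    unfolding EE_def by (rule suminf_le[OF _ s]) (use h in \<open>auto intro!: mult_left_mono min.mono\<close>)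
qed

lemma EE_bound:
  assumes "0 \<le> v" "v \<le> 1"
  shows "offspring_mean p * v - (1 - gen_fun p (1 - v)) \<le> v * EE v"
proof -
  have s1: "summable (\<lambda>k. pmf p k * real k * v)" using mean_fin by (rule summable_mult2)
  have s2: "summable (\<lambda>k. pmf p k * (1 - v) ^ k)" using assms by (intro pmf_pow_summable) auto
  have s3: "summable (\<lambda>k. pmf p k - pmf p k * (1 - v) ^ k)" by (intro summable_diff pmf_nat_summable s2)
  have "offspring_mean p * v = (\<Sum>k. pmf p k * real k * v)"
    unfolding offspring_mean_def by (rule suminf_mult2[OF mean_fin])
  moreover have "1 - gen_fun p (1 - v) = (\<Sum>k. pmf p k - pmf p k * (1 - v) ^ k)"
  proof -
    have "1 - gen_fun p (1 - v) = (\<Sum>k. pmf p k) - (\<Sum>k. pmf p k * (1 - v) ^ k)"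
      by (simp add: pmf_nat_sum1 gen_fun_def)
    then show ?thesis using suminf_diff[OF pmf_nat_summable s2] by simp
  qed
  ultimately have "offspring_mean p * v - (1 - gen_fun p (1 - v)) =
      (\<Sum>k. pmf p k * real k * v - (pmf p k - pmf p k * (1 - v) ^ k))"
    using suminf_diff[OF s1 s3] by simp
  also have "\<dots> \<le> (\<Sum>k. v * (pmf p k * real k * min 1 (real k * v)))"
  proof (rule suminf_le)
    show "summable (\<lambda>k. pmf p k * real k * v - (pmf p k - pmf p k * (1 - v) ^ k))"
      by (intro summable_diff s1 s3)
    show "summable (\<lambda>k. v * (pmf p k * real k * min 1 (real k * v)))"
      by (intro summable_mult EE_summable assms)
    fix k
    have key: "real k * v - 1 + (1 - v) ^ k \<le> real k * v * min 1 (real k * v)"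
    proof (cases "real k * v \<le> 1")
      case True
      then have "min 1 (real k * v) = real k * v" by simp
      then show ?thesis using pow_upper2[OF assms, of k] by (simp add: power2_eq_square)
    next
      case False
      then have "min 1 (real k * v) = 1" by simp
      moreover have "(1 - v) ^ k \<le> 1" using assms by (intro power_le_one) auto
      ultimately show ?thesis by simp
    qed
    have "pmf p k * real k * v - (pmf p k - pmf p k * (1 - v) ^ k) = pmf p k * (real k * v - 1 + (1 - v) ^ k)"
      by (simp add: algebra_simps)
    also have "\<dots> \<le> pmf p k * (real k * v * min 1 (real k * v))"
      by (rule mult_left_mono[OF key pmf_nonneg])
    finally show "pmf p k * real k * v - (pmf p k - pmf p k * (1 - v) ^ k) \<le> v * (pmf p k * real k * min 1 (real k * v))"
      by (simp add: mult_ac)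
  qed
  also have "\<dots> = v * EE v" unfolding EE_def by (rule suminf_mult[OF EE_summable[OF assms(1)]])
  finally show ?thesis .
qed

lemma EE_sum:
  assumes rho: "1 < rho"
  shows "\<exists>S. \<forall>J. (\<Sum>l<J. EE ((1 / rho) ^ l)) \<le> S"
proof -
  define c where "c = 2 * rho / (rho - 1)"
  have c0: "0 \<le> c" using rho by (simp add: c_def)
  have sl: "summable (\<lambda>k. pmf p k * real k * (c * ln (1 + real k)))"
  proof (rule summable_comparison_test)
    show "summable (\<lambda>k. c * (ln 2 * (pmf p k * real k) + pmf p k * (real k * ln (real k))))"
      by (intro summable_mult summable_add mean_fin LlogL)
    show "\<exists>N. \<forall>n\<ge>N. norm (pmf p n * real n * (c * ln (1 + real n))) \<le>
        c * (ln 2 * (pmf p n * real n) + pmf p n * (real n * ln (real n)))"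
    proof (intro exI allI impI)
      fix n :: nat assume "n \<ge> 1"
      have l: "ln (1 + real n) \<le> ln 2 + ln (real n)"
      proof -
        have "ln (1 + real n) \<le> ln (2 * real n)" using \<open>n \<ge> 1\<close> by simp
        also have "\<dots> = ln 2 + ln (real n)" using \<open>n \<ge> 1\<close> by (simp add: ln_mult)
        finally show ?thesis .
      qed
      have "0 \<le> pmf p n * real n * (c * ln (1 + real n))" using c0 by simp
      moreover have "pmf p n * real n * (c * ln (1 + real n)) \<le> pmf p n * real n * (c * (ln 2 + ln (real n)))"
        using l c0 by (intro mult_left_mono) auto
      ultimately show "norm (pmf p n * real n * (c * ln (1 + real n))) \<le>
        c * (ln 2 * (pmf p n * real n) + pmf p n * (real n * ln (real n)))"
        by (simp add: algebra_simps)
    qed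
  qed
  define S where "S = (\<Sum>k. pmf p k * real k * (c * ln (1 + real k)))"
  show ?thesis
  proof (intro exI[of _ S] allI)
    fix J
    have pos: "0 \<le> (1 / rho) ^ l" for l using rho by simp
    have "(\<Sum>l<J. EE ((1 / rho) ^ l)) = (\<Sum>k. \<Sum>l<J. pmf p k * real k * min 1 (real k * (1 / rho) ^ l))"
      unfolding EE_def by (rule suminf_sum[symmetric]) (rule EE_summable[OF pos])
    also have "\<dots> \<le> S" unfolding S_def
    proof (rule suminf_le[OF _ _ sl])
      fix k
      have "(\<Sum>l<J. pmf p k * real k * min 1 (real k * (1 / rho) ^ l)) = pmf p k * real k * (\<Sum>l<J. min 1 (real k * (1 / rho) ^ l))"
        by (simp add: sum_distrib_left)
      also have "\<dots> \<le> pmf p k * real k * (c * ln (1 + real k))"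
        unfolding c_def by (intro mult_left_mono min_geo_bound rho) auto
      finally show "(\<Sum>l<J. pmf p k * real k * min 1 (real k * (1 / rho) ^ l)) \<le> pmf p k * real k * (c * ln (1 + real k))" .
      show "summable (\<lambda>k. \<Sum>l<J. pmf p k * real k * min 1 (real k * (1 / rho) ^ l))"
        by (intro summable_sum EE_summable pos)
    qed
    finally show "(\<Sum>l<J. EE ((1 / rho) ^ l)) \<le> S" .
  qed
qed

lemma exp_neg2_le: "0 \<le> e \<Longrightarrow> e \<le> 1/2 \<Longrightarrow> exp (- 2 * e) \<le> 1 - (e::real)"
proof -
  assume e: "0 \<le> e" "e \<le> 1/2"
  have "1 + 2 * e \<le> exp (2 * e)" by (rule exp_ge_add_one_self)
  then have "exp (- 2 * e) \<le> 1 / (1 + 2 * e)" using e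
    by (simp add: exp_minus field_simps)
  also have "\<dots> \<le> 1 - e"
  proof -
    have "0 \<le> e * (1 - 2 * e)" using e by simp
    then have "1 \<le> (1 - e) * (1 + 2 * e)" by (simp add: algebra_simps)
    moreover have "0 < 1 + 2 * e" using e by simp
    ultimately show ?thesis by (simp add: pos_divide_le_eq)
  qed
  finally show ?thesis .
qed

lemma partB:
  assumes q0: "0 \<le> q" and qr: "q < r" and r1: "r < 1" and fq: "gen_fun p q = q"
    and fr: "gen_fun p r < r"
  shows "\<exists>B>0. \<forall>s. r < s \<longrightarrow> s < 1 \<longrightarrow>
     (\<exists>j\<ge>1. (gen_fun p ^^ j) s \<le> r \<and> q \<le> (gen_fun p ^^ j) s \<and> offspring_mean p ^ j \<le> B / (1 - s))"
proof -
  define m where "m = offspring_mean p"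
  have m1: "m > 1" using mean_gt1 by (simp add: m_def)
  define rho where "rho = CS r 1"
  have "1 - gen_fun p r = (1 - r) * rho" using F_diff[of r 1] qr q0 r1 by (simp add: gen_fun_1 rho_def)
  then have "(1 - r) * 1 < (1 - r) * rho" using fr by simp
  then have rho1: "rho > 1" using r1 by (simp only: mult_less_cancel_left_pos)
  obtain S where S: "\<And>J. (\<Sum>l<J. EE ((1 / rho) ^ l)) \<le> S" using EE_sum[OF rho1] by blast
  have S0: "0 \<le> S" using S[of 0] by simp
  define K where "K = 2 * (1 + ln m) / m"
  have K0: "0 < K" using m1 by (simp add: K_def add_pos_nonneg)
  define B where "B = m * exp (K * S)"
  have cq1: "CS q 1 = 1"
  proof -
    have "1 - q = (1 - q) * CS q 1" using F_diff[of q 1] fq q0 qr r1 by (simp add: gen_fun_1)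
    then show ?thesis using qr r1 by simp
  qed
  have h1: "q \<le> gen_fun p w \<and> gen_fun p w \<le> w" if w: "q \<le> w" "w \<le> 1" for w
  proof -
    have eq: "gen_fun p w - q = (w - q) * CS q w" using F_diff[of q w] fq q0 w by simp
    have "0 \<le> CS q w" "CS q w \<le> 1" using CS_nonneg[of q w] CS_mono[of q q w 1] q0 w cq1 by auto
    moreover have "0 \<le> w - q" using w by simp
    ultimately have "0 \<le> (w - q) * CS q w" "(w - q) * CS q w \<le> w - q"
      by (auto intro: mult_left_le)
    then show ?thesis using eq by linarith
  qed
  have h2: "rho * (1 - w) \<le> 1 - gen_fun p w" if w: "r \<le> w" "w < 1" for w
  proof -
    have "1 - gen_fun p w = (1 - w) * CS w 1" using F_diff[of w 1] w q0 qr by (simp add: gen_fun_1)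
    moreover have "rho \<le> CS w 1" unfolding rho_def using w q0 qr by (intro CS_mono) auto
    ultimately show ?thesis using w by (simp add: mult_ac mult_left_mono)
  qed
  have h3: "m * (1 - w) * exp (- K * EE (1 - w)) \<le> 1 - gen_fun p w" if w: "r \<le> w" "w < 1" for w
  proof -
    define v where "v = 1 - w"
    have v: "0 < v" "v \<le> 1" using w q0 qr by (auto simp: v_def)
    define e where "e = EE v / m"
    have e0: "0 \<le> e" using EE_nonneg[of v] v m1 by (simp add: e_def)
    have KE: "K * EE v = 2 * (1 + ln m) * e" using m1 by (simp add: K_def e_def)
    have lnm: "0 < ln m" using m1 by simp
    have b1: "m * v * (1 - e) \<le> 1 - gen_fun p w"
    proof -
      have "m * v * (1 - e) = m * v - v * EE v" using m1 by (simp add: e_def field_simps)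
      moreover have "m * v - (1 - gen_fun p (1 - v)) \<le> v * EE v"
        using EE_bound[of v] v unfolding m_def by simp
      moreover have "1 - v = w" by (simp add: v_def)
      ultimately show ?thesis by simp
    qed
    show ?thesis
    proof (cases "e \<le> 1/2")
      case True
      have "exp (- K * EE v) \<le> exp (- 2 * e)" using KE lnm e0 by (simp add: mult_left_mono algebra_simps)
      also have "\<dots> \<le> 1 - e" using exp_neg2_le[OF e0 True] .
      finally have "m * v * exp (- K * EE v) \<le> m * v * (1 - e)" using m1 v by (intro mult_left_mono) auto
      then show ?thesis using b1 by (simp add: v_def)
    next
      case False
      have "2 * (1 + ln m) * (1/2) \<le> 2 * (1 + ln m) * e" using False lnm by (intro mult_left_mono) auto
      then have "K * EE v \<ge> 1 + ln m" using KE by simp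
      then have "exp (- K * EE v) \<le> exp (- (1 + ln m))" by simp
      also have "\<dots> = exp (-1) / m" using m1 by (simp add: exp_diff exp_minus field_simps)
      finally have "m * exp (- K * EE v) \<le> exp (-1)" using m1 by (simp add: field_simps)
      also have "exp (-1::real) \<le> 1" by simp
      finally have "v * (m * exp (- K * EE v)) \<le> v * 1" using v by (intro mult_left_mono) auto
      then have "m * v * exp (- K * EE v) \<le> v" by (simp add: mult_ac)
      also have "v \<le> rho * v" using rho1 v by simp
      also have "\<dots> \<le> 1 - gen_fun p w" using h2[OF w] by (simp add: v_def)
      finally show ?thesis by (simp add: v_def)
    qed
  qed
  show ?thesis
  proof (intro exI[of _ B] conjI allI impI)
    show "0 < B" using m1 by (simp add: B_def)
    fix s assume s: "r < s" "s < 1"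
    define x where "x i = (gen_fun p ^^ i) s" for i
    define u where "u i = 1 - x i" for i
    have x1: "q \<le> x i \<and> x i \<le> s" for i
    proof (induction i)
      case 0 then show ?case using s qr by (simp add: x_def)
    next
      case (Suc i)
      then have "q \<le> gen_fun p (x i) \<and> gen_fun p (x i) \<le> x i" using h1 s by simp
      then show ?case using Suc by (simp add: x_def)
    qed
    have xs: "x (Suc i) = gen_fun p (x i)" for i by (simp add: x_def)
    have ex: "\<exists>i. x i \<le> r"
    proof (rule ccontr)
      assume "\<not> ?thesis"
      then have gt: "r < x i" for i using not_le by blast
      have grow: "rho ^ i * u 0 \<le> u i" for i
      proof (induction i)
        case (Suc i)
        have "rho * u i \<le> u (Suc i)" using h2[of "x i"] gt[of i] x1[of i] s by (simp add: u_def xs)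
        moreover have "rho ^ Suc i * u 0 \<le> rho * u i" using Suc rho1 by (simp add: mult.assoc)
        ultimately show ?case by simp
      qed simp
      have u0: "0 < u 0" using s by (simp add: u_def x_def)
      obtain n where n: "1 / u 0 < rho ^ n" using real_arch_pow[OF rho1] by blast
      then have "1 < rho ^ n * u 0" using u0 by (simp add: field_simps)
      then have "1 < u n" using grow[of n] by simp
      moreover have "u n \<le> 1" using x1[of n] q0 by (simp add: u_def)
      ultimately show False by simp
    qed
    define j where "j = (LEAST i. x i \<le> r)"
    have xj: "x j \<le> r" unfolding j_def using ex by (rule LeastI_ex)
    have xlt: "r < x i" if "i < j" for i using not_less_Least[OF that[unfolded j_def]] unfolding j_def by simp
    have j0: "j \<noteq> 0"
    proof
      assume "j = 0"
      then show False using xj s by (simp add: x_def)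
    qed
    then obtain N where N: "j = Suc N" by (cases j) auto
    have xin: "r < x i" "x i < 1" if "i \<le> N" for i using xlt[of i] that N x1[of i] s by auto
    have c1: "u (N - d) \<le> (1 / rho) ^ d * u N" if "d \<le> N" for d
      using that
    proof (induction d)
      case (Suc d)
      define i where "i = N - Suc d"
      have si: "Suc i = N - d" using Suc.prems by (simp add: i_def)
      have "rho * u i \<le> u (Suc i)" using h2[of "x i"] xin[of i] Suc.prems by (simp add: u_def xs i_def)
      also have "\<dots> \<le> (1 / rho) ^ d * u N" using Suc si by simp
      finally have "u i \<le> (1 / rho) ^ d * u N / rho" using rho1 by (simp add: field_simps)
      then show ?case by (simp add: i_def field_simps)
    qed simp
    have uN1: "u N \<le> 1" using x1[of N] q0 by (simp add: u_def)
    have unn: "0 \<le> u i" for i using x1[of i] s by (simp add: u_def)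
    have c1': "u i \<le> (1 / rho) ^ (N - i)" if "i \<le> N" for i
    proof -
      have "u i \<le> (1 / rho) ^ (N - i) * u N" using c1[of "N - i"] that by simp
      also have "\<dots> \<le> (1 / rho) ^ (N - i)" using uN1 unn[of N] rho1 by (simp add: mult_left_le)
      finally show ?thesis .
    qed
    have c2: "m ^ i * u 0 * exp (- K * (\<Sum>l<i. EE (u l))) \<le> u i" if "i \<le> N" for i
      using that
    proof (induction i)
      case (Suc i)
      have "m * u i * exp (- K * EE (u i)) \<le> u (Suc i)"
        using h3[of "x i"] xin[of i] Suc.prems by (simp add: u_def xs)
      moreover have "m ^ i * u 0 * exp (- K * (\<Sum>l<i. EE (u l))) * (m * exp (- K * EE (u i)))
          \<le> u i * (m * exp (- K * EE (u i)))"
        using Suc m1 by (intro mult_right_mono) auto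
      moreover have "m ^ Suc i * u 0 * exp (- K * (\<Sum>l<Suc i. EE (u l))) =
          m ^ i * u 0 * exp (- K * (\<Sum>l<i. EE (u l))) * (m * exp (- K * EE (u i)))"
      proof -
        have "exp (- K * (\<Sum>l<Suc i. EE (u l))) = exp (- K * (\<Sum>l<i. EE (u l))) * exp (- K * EE (u i))"
          by (simp add: algebra_simps flip: exp_add)
        then show ?thesis by (simp add: mult_ac)
      qed
      moreover have "u i * (m * exp (- K * EE (u i))) = m * u i * exp (- K * EE (u i))" by (simp add: mult_ac)
      ultimately show ?case by linarith
    qed simp
    have c3: "(\<Sum>l<N. EE (u l)) \<le> S"
    proof -
      have "(\<Sum>l<N. EE (u l)) \<le> (\<Sum>l<N. EE ((1 / rho) ^ Suc (N - Suc l)))"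
      proof (rule sum_mono)
        fix l assume l: "l \<in> {..<N}"
        have "Suc (N - Suc l) = N - l" using l by simp
        then show "EE (u l) \<le> EE ((1 / rho) ^ Suc (N - Suc l))"
          using c1'[of l] l unn[of l] by (intro EE_mono) auto
      qed
      also have "\<dots> = (\<Sum>d<N. EE ((1 / rho) ^ Suc d))"
        by (rule sum.nat_diff_reindex[where g = "\<lambda>d. EE ((1 / rho) ^ Suc d)"])
      also have "\<dots> \<le> EE ((1 / rho) ^ 0) + (\<Sum>d<N. EE ((1 / rho) ^ Suc d))"
        using EE_nonneg[of "(1/rho)^0"] by simp
      also have "\<dots> = (\<Sum>d<Suc N. EE ((1 / rho) ^ d))" by (subst sum.lessThan_Suc_shift) simp
      also have "\<dots> \<le> S" by (rule S)
      finally show ?thesis .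
    qed
    have "m ^ N * u 0 * exp (- K * S) \<le> m ^ N * u 0 * exp (- K * (\<Sum>l<N. EE (u l)))"
      using c3 K0 m1 unn[of 0] by (intro mult_left_mono) auto
    also have "\<dots> \<le> 1" using c2[of N] uN1 by simp
    finally have "m ^ N * u 0 * exp (- K * S) \<le> 1" .
    moreover have u0: "u 0 = 1 - s" by (simp add: u_def x_def)
    ultimately have "m ^ N \<le> exp (K * S) / (1 - s)" using s
      by (simp add: field_simps exp_minus)
    then have "m * m ^ N \<le> m * (exp (K * S) / (1 - s))" using m1 by (intro mult_left_mono) auto
    then have "m ^ j \<le> B / (1 - s)" by (simp add: N B_def)
    then show "\<exists>j\<ge>1. (gen_fun p ^^ j) s \<le> r \<and> q \<le> (gen_fun p ^^ j) s \<and> offspring_mean p ^ j \<le> B / (1 - s)"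
      using xj x1[of j] j0 by (intro exI[of _ j]) (auto simp: x_def m_def)
  qed
qed

lemma alpha_facts:
  defines "g \<equiv> CS (extinction_prob p) (extinction_prob p)"
  shows "gen_fun_deriv p (extinction_prob p) = g" "0 \<le> schroeder_alpha p"
    "g = offspring_mean p powr (- schroeder_alpha p)"
proof -
  have q0: "0 \<le> extinction_prob p" and q1: "extinction_prob p < 1" using q_props gamma_props by auto
  show gd: "gen_fun_deriv p (extinction_prob p) = g" unfolding g_def using q0 q1 by (intro CS_deriv) auto
  have g0: "0 < g" "g \<le> 1" using gamma_props by (auto simp: g_def)
  have lm: "0 < ln (offspring_mean p)" using mean_gt1 by simp
  have a: "schroeder_alpha p = - ln g / ln (offspring_mean p)" unfolding schroeder_alpha_def gd ..
  have "ln g \<le> 0" using g0 by simp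
  then show "0 \<le> schroeder_alpha p" unfolding a using lm by (simp add: divide_nonpos_pos)
  have e1: "offspring_mean p powr (- schroeder_alpha p) = exp (- schroeder_alpha p * ln (offspring_mean p))"
    using mean_gt1 by (simp add: powr_def)
  have e2: "- schroeder_alpha p * ln (offspring_mean p) = ln g" unfolding a using lm by simp
  show "g = offspring_mean p powr (- schroeder_alpha p)" unfolding e1 e2 using g0 by simp
qed

lemma main_bound: "\<exists>C>0. \<forall>n s. 0 \<le> s \<longrightarrow> s < 1 \<longrightarrow>
   (gen_fun p ^^ n) s - (gen_fun p ^^ n) 0 \<le> C * CS (extinction_prob p) (extinction_prob p) ^ n
      * (1 - s) powr (- schroeder_alpha p)"
proof -
  define q where "q = extinction_prob p"
  define g where "g = CS q q"
  define \<alpha> where "\<alpha> = schroeder_alpha p"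
  define m where "m = offspring_mean p"
  have fq: "gen_fun p q = q" and q0: "0 \<le> q" and q1: "q < 1" using q_props gamma_props by (auto simp: q_def)
  obtain r where r: "q < r" "r < 1" "gen_fun p r < r" using q_props by (auto simp: q_def)
  have g0: "0 < g" "g \<le> 1" using gamma_props by (auto simp: g_def q_def)
  have a0: "0 \<le> \<alpha>" and gm: "g = m powr (- \<alpha>)" using alpha_facts by (auto simp: g_def q_def \<alpha>_def m_def)
  have m1: "1 < m" using mean_gt1 by (simp add: m_def)
  obtain A where A: "A > 0" "\<And>t k. q \<le> t \<Longrightarrow> t \<le> r \<Longrightarrow> (gen_fun p ^^ k) t - q \<le> A * g ^ k"
    using partA[OF q0 r(1,2) fq r(3)] g0 by (auto simp: g_def)
  obtain B where B: "B > 0" "\<And>s. r < s \<Longrightarrow> s < 1 \<Longrightarrow>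
     (\<exists>j\<ge>1. (gen_fun p ^^ j) s \<le> r \<and> q \<le> (gen_fun p ^^ j) s \<and> m ^ j \<le> B / (1 - s))"
    using partB[OF q0 r(1,2) fq r(3)] unfolding m_def by blast
  define C where "C = 1 + A + max A 1 * B powr \<alpha>"
  have iq: "(gen_fun p ^^ n) q = q" for n by (induction n) (auto simp: fq)
  have D0: "q - (gen_fun p ^^ n) 0 \<le> g ^ n" for n
  proof -
    have "q - (gen_fun p ^^ n) 0 \<le> g ^ n * q"
    proof (induction n)
      case (Suc n)
      define y where "y = (gen_fun p ^^ n) 0"
      have y: "0 \<le> y" "y \<le> q" using iter_01[where s=0 and p=p and n=n] iter_mono[of 0 q n] q0 q1 iq[of n]
        by (auto simp: y_def)
      have "q - gen_fun p y = (q - y) * CS y q" using F_diff[of y q] fq y q1 by simp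
      also have "\<dots> \<le> (q - y) * g" unfolding g_def using y q1 by (intro mult_left_mono CS_mono) auto
      also have "\<dots> \<le> g ^ n * q * g" using Suc g0 by (simp add: y_def mult_right_mono)
      finally show ?case by (simp add: y_def mult_ac)
    qed simp
    also have "\<dots> \<le> g ^ n" using q0 q1 g0 by (simp add: mult_left_le)
    finally show ?thesis .
  qed
  show ?thesis
  proof (intro exI[of _ C] conjI allI impI)
    show "0 < C" using A B by (simp add: C_def add_pos_nonneg)
    fix n :: nat and s :: real assume s: "0 \<le> s" "s < 1"
    define P where "P = (1 - s) powr (- \<alpha>)"
    have P1: "1 \<le> P"
    proof -
      have "(1 - s) powr \<alpha> \<le> 1" using s a0 by (intro powr_le1) auto
      moreover have "0 < (1 - s) powr \<alpha>" using s by simp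
      ultimately show ?thesis by (simp add: P_def powr_minus_divide)
    qed
    have gn: "0 \<le> g ^ n" using g0 by simp
    have fin: "(gen_fun p ^^ n) s - q \<le> (A + max A 1 * B powr \<alpha>) * g ^ n * P"
    proof (cases "s \<le> r")
      case True
      show ?thesis
      proof (cases "s \<le> q")
        case True
        have "(gen_fun p ^^ n) s \<le> q" using iter_mono[of s q n] s True q1 iq[of n] by simp
        moreover have "0 \<le> (A + max A 1 * B powr \<alpha>) * g ^ n * P" using A P1 gn by simp
        ultimately show ?thesis by simp
      next
        case False
        then have "(gen_fun p ^^ n) s - q \<le> A * g ^ n" using A(2)[of s n] \<open>s \<le> r\<close> by simp
        also have "\<dots> \<le> A * g ^ n * P"
        proof -
          have "A * g ^ n * 1 \<le> A * g ^ n * P" using P1 A gn by (intro mult_left_mono) auto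
          then show ?thesis by simp
        qed
        also have "\<dots> \<le> (A + max A 1 * B powr \<alpha>) * g ^ n * P" using A P1 gn B
          by (intro mult_right_mono) auto
        finally show ?thesis .
      qed
    next
      case False
      then obtain j where j: "j \<ge> 1" "(gen_fun p ^^ j) s \<le> r" "q \<le> (gen_fun p ^^ j) s" "m ^ j \<le> B / (1 - s)"
        using B(2)[of s] s by auto
      have gj0: "0 < g ^ j" using g0 by simp
      have inv: "1 / g ^ j \<le> B powr \<alpha> * P"
      proof -
        have "g ^ j = m powr (real j * - \<alpha>)" unfolding gm using m1 by (simp add: powr_power)
        then have "1 / g ^ j = m powr (real j * \<alpha>)" by (simp add: powr_minus_divide)
        also have "\<dots> = (m ^ j) powr \<alpha>" using m1 by (simp add: powr_realpow[symmetric] powr_powr)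
        also have "\<dots> \<le> (B / (1 - s)) powr \<alpha>" using j(4) a0 m1 by (intro powr_mono2) auto
        also have "\<dots> = B powr \<alpha> * P" unfolding P_def using s B
          by (simp add: powr_divide powr_minus_divide)
        finally show ?thesis .
      qed
      have bnd: "(gen_fun p ^^ n) s - q \<le> max A 1 * (g ^ n / g ^ j)"
      proof (cases "j \<le> n")
        case True
        have "(gen_fun p ^^ n) s = (gen_fun p ^^ (n - j)) ((gen_fun p ^^ j) s)"
        proof -
          have "n = (n - j) + j" using True by simp
          then have "(gen_fun p ^^ n) = (gen_fun p ^^ (n - j)) \<circ> (gen_fun p ^^ j)"
            by (metis funpow_add)
          then show ?thesis by simp
        qed
        then have "(gen_fun p ^^ n) s - q \<le> A * g ^ (n - j)" using A(2)[OF j(3) j(2)] by simp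
        also have "g ^ (n - j) = g ^ n / g ^ j" using True g0 by (simp add: power_diff)
        also have "A * (g ^ n / g ^ j) \<le> max A 1 * (g ^ n / g ^ j)" using gj0 gn
          by (intro mult_right_mono) auto
        finally show ?thesis .
      next
        case False
        have "(gen_fun p ^^ n) s \<le> 1" using iter_01[where s=s and p=p and n=n] s by simp
        then have "(gen_fun p ^^ n) s - q \<le> 1" using q0 by simp
        also have "1 \<le> g ^ n / g ^ j" using False g0 gj0 by (simp add: power_decreasing)
        also have "\<dots> \<le> max A 1 * (g ^ n / g ^ j)"
        proof -
          have "1 * (g ^ n / g ^ j) \<le> max A 1 * (g ^ n / g ^ j)" using gj0 gn
            by (intro mult_right_mono) auto
          then show ?thesis by simp
        qed
        finally show ?thesis .
      qed
      also have "\<dots> = max A 1 * g ^ n * (1 / g ^ j)" by simp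
      also have "\<dots> \<le> max A 1 * g ^ n * (B powr \<alpha> * P)"
        using inv gn by (intro mult_left_mono) auto
      also have "\<dots> \<le> (A + max A 1 * B powr \<alpha>) * g ^ n * P"
      proof -
        have "0 \<le> A * g ^ n * P" using A gn P1 by simp
        then show ?thesis by (simp add: algebra_simps)
      qed
      finally show ?thesis .
    qed
    have "(gen_fun p ^^ n) s - (gen_fun p ^^ n) 0 = ((gen_fun p ^^ n) s - q) + (q - (gen_fun p ^^ n) 0)" by simp
    also have "\<dots> \<le> (A + max A 1 * B powr \<alpha>) * g ^ n * P + g ^ n * P"
    proof -
      have "g ^ n * 1 \<le> g ^ n * P" using gn P1 by (intro mult_left_mono) auto
      then show ?thesis using fin D0[of n] by simp
    qed
    also have "\<dots> = C * g ^ n * P" by (simp add: C_def algebra_simps)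
    finally show "(gen_fun p ^^ n) s - (gen_fun p ^^ n) 0 \<le> C * CS (extinction_prob p) (extinction_prob p) ^ n
      * (1 - s) powr (- schroeder_alpha p)" by (simp add: g_def q_def P_def \<alpha>_def)
  qed
qed

end

theorem lemma5:
  fixes p :: "nat pmf" and M :: "'a measure" and X :: "nat \<Rightarrow> 'a \<Rightarrow> real"
  assumes mean_fin: "summable (\<lambda>k. pmf p k * real k)"
    and mean_gt1: "offspring_mean p > 1"
    and LlogL: "summable (\<lambda>k. pmf p k * (real k * ln (real k)))"
    and schroeder: "pmf p 0 + pmf p 1 > 0"
    and M: "prob_space M"
    and X_rv: "\<And>i. X i \<in> borel_measurable M"
    and X_indep: "prob_space.indep_vars M (\<lambda>_. borel) X UNIV"
    and X_id: "\<And>i. distr M borel (X i) = distr M borel (X 1)"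
    and X_int: "integrable M (\<lambda>\<omega>. (X 1 \<omega>)\<^sup>2)"
    and X_mean0: "prob_space.expectation M (X 1) = 0"
    and X_var_pos: "prob_space.expectation M (\<lambda>\<omega>. (X 1 \<omega>)\<^sup>2) > 0"
  shows "\<exists>c>0. \<forall>\<delta>>0. \<forall>\<epsilon>>0. \<forall>n\<ge>1.
    (\<Sum>k\<in>{k::nat. 1 \<le> k \<and> real k \<le> \<delta> / \<epsilon>\<^sup>2}.
        pmf (gw_pmf p n) k *
        measure M {\<omega>\<in>space M. (\<Sum>i\<in>{1..k}. X i \<omega>) \<ge> \<epsilon> * real k})
    \<le> c * \<delta> powr (schroeder_alpha p) * \<epsilon> powr (-2 * schroeder_alpha p)
        * offspring_mean p powr (- schroeder_alpha p * real n)"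
proof -
  define q where "q = extinction_prob p"
  define g where "g = CS p q q"
  define \<alpha> where "\<alpha> = schroeder_alpha p"
  define m where "m = offspring_mean p"
  have "\<exists>C>0. \<forall>n s. 0 \<le> s \<longrightarrow> s < 1 \<longrightarrow>
     (gen_fun p ^^ n) s - (gen_fun p ^^ n) 0 \<le> C * g ^ n * (1 - s) powr (- \<alpha>)"
    using main_bound[OF mean_fin mean_gt1 LlogL schroeder] unfolding g_def q_def \<alpha>_def .
  then obtain C where C0: "C > 0" and Call: "\<forall>n s. 0 \<le> s \<longrightarrow> s < 1 \<longrightarrow>
     (gen_fun p ^^ n) s - (gen_fun p ^^ n) 0 \<le> C * g ^ n * (1 - s) powr (- \<alpha>)" by blast
  have C: "(gen_fun p ^^ n) s - (gen_fun p ^^ n) 0 \<le> C * g ^ n * (1 - s) powr (- \<alpha>)"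
    if "0 \<le> s" "s < 1" for n s using Call that by simp
  have a0: "0 \<le> \<alpha>" and gm: "g = m powr (- \<alpha>)"
    using alpha_facts[OF mean_fin mean_gt1 LlogL schroeder] by (auto simp: g_def q_def \<alpha>_def m_def)
  have m1: "1 < m" using mean_gt1 by (simp add: m_def)
  have g0: "0 < g" using gm m1 by simp
  define c where "c = 2 * C * 2 powr \<alpha>"
  show ?thesis
  proof (intro exI[of _ c] conjI allI impI)
    show "0 < c" using C0 by (simp add: c_def)
    fix \<delta> \<epsilon> :: real and n :: nat
    assume d: "0 < \<delta>" and e: "0 < \<epsilon>" and n: "1 \<le> n"
    define x where "x = \<delta> / \<epsilon>\<^sup>2"
    have x0: "0 < x" using d e by (simp add: x_def)
    define K where "K = {k::nat. 1 \<le> k \<and> real k \<le> \<delta> / \<epsilon>\<^sup>2}"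
    define T where "T k = pmf (gw_pmf p n) k * measure M {\<omega>\<in>space M. (\<Sum>i\<in>{1..k}. X i \<omega>) \<ge> \<epsilon> * real k}" for k
    have gpow: "m powr (- \<alpha> * real n) = g ^ n"
    proof -
      have "m powr (- \<alpha> * real n) = (m powr (- \<alpha>)) powr real n" by (rule powr_powr[symmetric])
      also have "\<dots> = g powr real n" by (simp only: gm[symmetric])
      also have "\<dots> = g ^ n" by (rule powr_realpow[OF g0])
      finally show ?thesis .
    qed
    have RHS: "c * \<delta> powr \<alpha> * \<epsilon> powr (-2 * \<alpha>) * m powr (- \<alpha> * real n) = 2 * C * 2 powr \<alpha> * x powr \<alpha> * g ^ n"
    proof -
      have "x powr \<alpha> = \<delta> powr \<alpha> / (\<epsilon>\<^sup>2) powr \<alpha>" unfolding x_def using d e by (simp add: powr_divide)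
      also have "(\<epsilon>\<^sup>2) powr \<alpha> = \<epsilon> powr (2 * \<alpha>)"
      proof -
        have ee: "\<epsilon>\<^sup>2 = \<epsilon> powr 2" using e by simp
        show ?thesis by (subst ee, rule powr_powr)
      qed
      finally have "x powr \<alpha> = \<delta> powr \<alpha> * \<epsilon> powr (-2 * \<alpha>)" by (simp add: powr_minus_divide)
      then show ?thesis unfolding gpow c_def by (simp add: mult_ac)
    qed
    have Tle: "T k \<le> pmf (gw_pmf p n) k" for k
    proof -
      have "measure M {\<omega>\<in>space M. (\<Sum>i\<in>{1..k}. X i \<omega>) \<ge> \<epsilon> * real k} \<le> 1"
        using prob_space.prob_le_1[OF M] by blast
      then show ?thesis unfolding T_def by (simp add: mult_left_le)
    qed
    have finK: "finite K"
    proof (rule finite_subset[of _ "{..nat \<lceil>x\<rceil>}"])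
      show "K \<subseteq> {..nat \<lceil>x\<rceil>}"
      proof
        fix k assume "k \<in> K"
        then have "real k \<le> x" by (simp add: K_def x_def)
        then have "\<lceil>real k\<rceil> \<le> \<lceil>x\<rceil>" by (rule ceiling_mono)
        then have "int k \<le> \<lceil>x\<rceil>" by simp
        then show "k \<in> {..nat \<lceil>x\<rceil>}" by simp
      qed
    qed simp
    show "(\<Sum>k\<in>{k::nat. 1 \<le> k \<and> real k \<le> \<delta> / \<epsilon>\<^sup>2}.
        pmf (gw_pmf p n) k *
        measure M {\<omega>\<in>space M. (\<Sum>i\<in>{1..k}. X i \<omega>) \<ge> \<epsilon> * real k})
      \<le> c * \<delta> powr (schroeder_alpha p) * \<epsilon> powr (-2 * schroeder_alpha p)
        * offspring_mean p powr (- schroeder_alpha p * real n)"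
    proof -
      have lhs: "(\<Sum>k\<in>{k::nat. 1 \<le> k \<and> real k \<le> \<delta> / \<epsilon>\<^sup>2}.
        pmf (gw_pmf p n) k *
        measure M {\<omega>\<in>space M. (\<Sum>i\<in>{1..k}. X i \<omega>) \<ge> \<epsilon> * real k}) = sum T K"
        unfolding T_def K_def ..
      have rhs: "c * \<delta> powr (schroeder_alpha p) * \<epsilon> powr (-2 * schroeder_alpha p)
        * offspring_mean p powr (- schroeder_alpha p * real n) = 2 * C * 2 powr \<alpha> * x powr \<alpha> * g ^ n"
        using RHS unfolding \<alpha>_def m_def .
      have "sum T K \<le> 2 * C * 2 powr \<alpha> * x powr \<alpha> * g ^ n"
      proof (cases "x < 1")
        case True
        then have "K = {}" unfolding K_def x_def[symmetric] by auto
        then show ?thesis using C0 g0 x0 by simp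
      next
        case False
        then have x1: "1 \<le> x" by simp
        define s where "s = 1 - 1 / (2 * x)"
        have s01: "0 \<le> s" "s < 1" using x1 by (auto simp: s_def field_simps)
        have sk: "1 / 2 \<le> s ^ k" if "k \<in> K" for k
        proof -
          have kx: "real k \<le> x" using that by (simp add: K_def x_def)
          have "1 + real k * (- (1 / (2 * x))) \<le> (1 + (- (1 / (2 * x)))) ^ k"
            by (rule Bernoulli_inequality) (use x1 in \<open>simp add: field_simps\<close>)
          moreover have "1 / 2 \<le> 1 + real k * (- (1 / (2 * x)))" using kx x1 by (simp add: field_simps)
          ultimately show ?thesis by (simp add: s_def)
        qed
        have "sum T K \<le> (\<Sum>k\<in>K. 2 * (pmf (gw_pmf p n) k * s ^ k))"
        proof (rule sum_mono)
          fix k assume k: "k \<in> K"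
          have "pmf (gw_pmf p n) k * 1 \<le> pmf (gw_pmf p n) k * (2 * s ^ k)"
            using sk[OF k] by (intro mult_left_mono) auto
          then show "T k \<le> 2 * (pmf (gw_pmf p n) k * s ^ k)" using Tle[of k] by (simp add: mult_ac)
        qed
        also have "\<dots> = 2 * (\<Sum>k\<in>K. pmf (gw_pmf p n) k * s ^ k)" by (simp add: sum_distrib_left)
        also have "(\<Sum>k\<in>K. pmf (gw_pmf p n) k * s ^ k) \<le> (gen_fun p ^^ n) s - (gen_fun p ^^ n) 0"
        proof -
          have 0: "0 \<notin> K" by (simp add: K_def)
          have "(\<Sum>k\<in>insert 0 K. pmf (gw_pmf p n) k * s ^ k) \<le> (\<Sum>k. pmf (gw_pmf p n) k * s ^ k)"
            by (rule sum_le_suminf[OF pmf_pow_summable]) (use s01 finK in auto)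
          moreover have "(\<Sum>k\<in>insert 0 K. pmf (gw_pmf p n) k * s ^ k) = pmf (gw_pmf p n) 0 + (\<Sum>k\<in>K. pmf (gw_pmf p n) k * s ^ k)"
            using finK 0 by simp
          moreover have "(\<Sum>k. pmf (gw_pmf p n) k * s ^ k) = (gen_fun p ^^ n) s"
            using gw_gen s01 by simp
          moreover have "(gen_fun p ^^ n) 0 = pmf (gw_pmf p n) 0"
          proof -
            have "(gen_fun p ^^ n) 0 = (\<Sum>k. pmf (gw_pmf p n) k * 0 ^ k)" using gw_gen[of 0 p n] by simp
            also have "\<dots> = pmf (gw_pmf p n) 0" by (subst suminf_finite[of "{0}"]) auto
            finally show ?thesis .
          qed
          ultimately show ?thesis by simp
        qed
        then have "2 * (\<Sum>k\<in>K. pmf (gw_pmf p n) k * s ^ k) \<le> 2 * ((gen_fun p ^^ n) s - (gen_fun p ^^ n) 0)" by simp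
        also have "\<dots> \<le> 2 * (C * g ^ n * (1 - s) powr (- \<alpha>))" using C[of s n, OF s01] by (simp only: mult_le_cancel_left_pos[of 2] zero_less_numeral)
        also have "(1 - s) powr (- \<alpha>) = 2 powr \<alpha> * x powr \<alpha>"
        proof -
          have "1 - s = 1 / (2 * x)" by (simp add: s_def)
          then have "(1 - s) powr (- \<alpha>) = (2 * x) powr \<alpha>" using x0
            by (simp add: powr_minus_divide powr_divide)
          also have "\<dots> = 2 powr \<alpha> * x powr \<alpha>" using x0 by (simp add: powr_mult)
          finally show ?thesis .
        qed
        finally show ?thesis by (simp add: mult_ac)
      qed
      then show ?thesis unfolding lhs rhs .
    qed
  qed
qed

end
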